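(* Let $G_1=(V_1,E_1)$ and $G_2=(V_2,E_2)$ be graphs such that $V_1\cap V_2$ induces a clique in both $G_1$ and $G_2$ and $|V_1\cap V_2|=k\le 3$, and let $G=(V_1\cup V_2,E_1\cup E_2)$ (their clique $k$-sum). Then $\kappa(G)=\max(\kappa(G_1),\kappa(G_2))$.
   Context: For a graph $G=([n],E)$ and $w\in\mathbb{R}^E$, let $\mathrm{ip}(G,w)=\max_{x\in\{\pm1\}^n}\sum_{ij\in E}w_{ij}x_ix_j$ and $\mathrm{sdp}(G,w)=\max\sum_{ij\in E}w_{ij}u_i^Tu_j$, the maximum over unit vectors $u_1,\dots,u_n\in\mathbb{R}^n$. The Grothendieck constant of $G$ is $\kappa(G)=\sup_{w\in\mathbb{R}^E}\mathrm{sdp}(G,w)/\mathrm{ip}(G,w)$. *)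

theory Defs
  imports Complex_Main
begin

definition graph :: "'a set \<Rightarrow> 'a set set \<Rightarrow> bool" where
  "graph V E \<longleftrightarrow> finite V \<and> E \<subseteq> {{i, j} | i j. i \<in> V \<and> j \<in> V \<and> i \<noteq> j}"

text \<open>Sum over edges ij of w_ij * f i j (f symmetric), written as half the sum over ordered
  pairs of adjacent vertices.\<close>
definition edge_sum :: "'a set \<Rightarrow> 'a set set \<Rightarrow> ('a set \<Rightarrow> real) \<Rightarrow> ('a \<Rightarrow> 'a \<Rightarrow> real) \<Rightarrow> real" where
  "edge_sum V E w f = (\<Sum>i\<in>V. \<Sum>j\<in>V. if {i, j} \<in> E then w {i, j} * f i j else 0) / 2"

definition ip :: "'a set \<Rightarrow> 'a set set \<Rightarrow> ('a set \<Rightarrow> real) \<Rightarrow> real" where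
  "ip V E w = Max {edge_sum V E w (\<lambda>i j. x i * x j) | x :: 'a \<Rightarrow> real.
                     \<forall>i\<in>V. x i = 1 \<or> x i = -1}"

text \<open>Vectors in R^n, n = card V, represented as functions nat => real on coordinates 0..n-1.\<close>
definition sdp :: "'a set \<Rightarrow> 'a set set \<Rightarrow> ('a set \<Rightarrow> real) \<Rightarrow> real" where
  "sdp V E w = Sup {edge_sum V E w (\<lambda>i j. \<Sum>k<card V. u i k * u j k) | u :: 'a \<Rightarrow> nat \<Rightarrow> real.
                     \<forall>i\<in>V. (\<Sum>k<card V. (u i k)\<^sup>2) = 1}"

definition groth :: "'a set \<Rightarrow> 'a set set \<Rightarrow> real" where
  "groth V E = Sup {sdp V E w / ip V E w | w :: 'a set \<Rightarrow> real. True}"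

end

theory Submission imports Defs "HOL-Library.FuncSet"
begin

abbreviation pm :: "'a set \<Rightarrow> ('a \<Rightarrow> real) \<Rightarrow> bool" where
  "pm V x \<equiv> \<forall>i\<in>V. x i = 1 \<or> x i = -1"

abbreviation xx :: "('a \<Rightarrow> real) \<Rightarrow> 'a \<Rightarrow> 'a \<Rightarrow> real" where
  "xx x \<equiv> (\<lambda>i j. x i * x j)"

lemma edge_mem:
  assumes "graph V E" "{i,j} \<in> E"
  shows "i \<in> V \<and> j \<in> V \<and> i \<noteq> j"
proof -
  obtain a b where "{i,j} = {a,b}" "a \<in> V" "b \<in> V" "a \<noteq> b"
    using assms unfolding graph_def by blast
  then show ?thesis by (metis doubleton_eq_iff)
qed

lemma edge_sum_cong:
  assumes "\<And>i j. i \<in> V \<Longrightarrow> j \<in> V \<Longrightarrow> f i j = g i j"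
  shows "edge_sum V E w f = edge_sum V E w g"
  unfolding edge_sum_def using assms by (intro arg_cong[where f="\<lambda>t. t / 2"] sum.cong refl) auto

lemma fin_vals:
  assumes "finite V" "\<And>x x'. (\<forall>i\<in>V. x i = x' i) \<Longrightarrow> g x = g x'"
  shows "finite {g x | x. pm V x \<and> P x}"
proof -
  have "{g x | x. pm V x \<and> P x} \<subseteq> g ` (PiE V (\<lambda>_. {-1, 1::real}))"
  proof
    fix y assume "y \<in> {g x | x. pm V x \<and> P x}"
    then obtain x where x: "y = g x" "pm V x" by blast
    have "g x = g (restrict x V)" using assms(2)[of x "restrict x V"] by simp
    moreover have "restrict x V \<in> PiE V (\<lambda>_. {-1, 1::real})"
      using x(2) by (auto simp: restrict_PiE_iff)
    ultimately show "y \<in> g ` (PiE V (\<lambda>_. {-1, 1::real}))" using x by blast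
  qed
  moreover have "finite (PiE V (\<lambda>_. {-1, 1::real}))" using assms(1) by (intro finite_PiE) auto
  ultimately show ?thesis by (meson finite_surj)
qed

lemma ip_set_fin:
  assumes "finite V"
  shows "finite {edge_sum V E w (xx x) | x. pm V x}"
proof -
  have "finite {edge_sum V E w (xx x) | x. pm V x \<and> True}"
    by (rule fin_vals[OF assms]) (intro edge_sum_cong, auto)
  then show ?thesis by simp
qed

lemma ip_upper:
  assumes "finite V" "pm V x"
  shows "edge_sum V E w (xx x) \<le> ip V E w"
  unfolding ip_def using assms ip_set_fin[OF assms(1), of E w] by (intro Max_ge) auto

lemma ip_attain:
  assumes "finite V"
  shows "\<exists>x. pm V x \<and> ip V E w = edge_sum V E w (xx x)"
proof -
  have "edge_sum V E w (xx (\<lambda>_. 1)) \<in> {edge_sum V E w (xx x) | x. pm V x}"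
    by (rule CollectI, rule exI[of _ "\<lambda>_. 1"]) simp
  then have ne: "{edge_sum V E w (xx x) | x. pm V x} \<noteq> {}" by blast
  have "ip V E w \<in> {edge_sum V E w (xx x) | x. pm V x}"
    unfolding ip_def using Max_in[OF ip_set_fin[OF assms] ne] .
  then show ?thesis by auto
qed

lemma edge_sum_insert:
  assumes "finite U" "v \<notin> U" "{v} \<notin> E"
  shows "edge_sum (insert v U) E w (xx y) = edge_sum U E w (xx y)
     + y v * (\<Sum>j\<in>U. if {v,j} \<in> E then w {v,j} * y j else 0)"
proof -
  define g where "g = (\<lambda>i j. if {i,j} \<in> E then w {i,j} * (y i * y j) else 0)"
  define S where "S = (\<Sum>j\<in>U. if {v,j} \<in> E then w {v,j} * y j else 0)"
  have s: "(\<Sum>i\<in>U. g i v) = y v * S"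
    unfolding S_def sum_distrib_left g_def by (intro sum.cong) (auto simp: insert_commute)
  have s2: "(\<Sum>j\<in>U. g v j) = y v * S"
    unfolding S_def sum_distrib_left g_def by (intro sum.cong) auto
  have gvv: "g v v = 0" using assms(3) by (simp add: g_def)
  have "(\<Sum>i\<in>insert v U. \<Sum>j\<in>insert v U. g i j)
     = (\<Sum>j\<in>insert v U. g v j) + (\<Sum>i\<in>U. \<Sum>j\<in>insert v U. g i j)"
    using assms by (simp add: sum.insert)
  also have "\<dots> = (g v v + (\<Sum>j\<in>U. g v j)) + (\<Sum>i\<in>U. g i v + (\<Sum>j\<in>U. g i j))"
    using assms by (simp add: sum.insert)
  also have "\<dots> = 2 * (y v * S) + (\<Sum>i\<in>U. \<Sum>j\<in>U. g i j)"
    by (simp add: sum.distrib s s2 gvv)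
  finally have "(\<Sum>i\<in>insert v U. \<Sum>j\<in>insert v U. g i j) = 2 * (y v * S) + (\<Sum>i\<in>U. \<Sum>j\<in>U. g i j)" .
  moreover have "edge_sum (insert v U) E w (xx y) = (\<Sum>i\<in>insert v U. \<Sum>j\<in>insert v U. g i j) / 2"
    by (simp add: edge_sum_def g_def)
  moreover have "edge_sum U E w (xx y) = (\<Sum>i\<in>U. \<Sum>j\<in>U. g i j) / 2"
    by (simp add: edge_sum_def g_def)
  ultimately show ?thesis unfolding S_def[symmetric] by simp
qed

lemma greedy_ext:
  assumes "finite T" "finite S" "\<And>i. {i} \<notin> E" "pm S x"
  shows "\<exists>x'. pm (S \<union> T) x' \<and> (\<forall>i\<in>S. x' i = x i)
            \<and> edge_sum S E w (xx x) \<le> edge_sum (S \<union> T) E w (xx x')"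
  using assms(1)
proof (induction T rule: finite_induct)
  case empty
  then show ?case using assms(4) by (intro exI[of _ x]) auto
next
  case (insert v T)
  then obtain x' where x': "pm (S \<union> T) x'" "\<forall>i\<in>S. x' i = x i"
     "edge_sum S E w (xx x) \<le> edge_sum (S \<union> T) E w (xx x')" by blast
  show ?case
  proof (cases "v \<in> S \<union> T")
    case True
    then have "S \<union> insert v T = S \<union> T" by auto
    then show ?thesis using x' by auto
  next
    case False
    define U where "U = S \<union> T"
    have fU: "finite U" using insert assms(2) by (simp add: U_def)
    define Sm where "Sm = (\<Sum>j\<in>U. if {v,j} \<in> E then w {v,j} * x' j else 0)"
    define s where "s = (if Sm \<ge> 0 then 1 else (-1::real))"
    define y where "y = x'(v := s)"
    have eq: "S \<union> insert v T = insert v U" by (auto simp: U_def)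
    have Sm': "(\<Sum>j\<in>U. if {v,j} \<in> E then w {v,j} * y j else 0) = Sm"
      unfolding Sm_def y_def using False U_def by (intro sum.cong) auto
    have e1: "edge_sum U E w (xx y) = edge_sum U E w (xx x')"
      by (rule edge_sum_cong) (use False U_def in \<open>auto simp: y_def\<close>)
    have "edge_sum (insert v U) E w (xx y) = edge_sum U E w (xx x') + s * Sm"
      using edge_sum_insert[OF fU, of v E w y] False U_def assms(3) e1 Sm'
      by (simp add: y_def)
    moreover have "s * Sm \<ge> 0" by (simp add: s_def)
    ultimately have "edge_sum S E w (xx x) \<le> edge_sum (insert v U) E w (xx y)"
      using x'(3) unfolding U_def by linarith
    moreover have "pm (insert v U) y" using x'(1) by (auto simp: y_def s_def U_def)
    moreover have "\<forall>i\<in>S. y i = x i" using x'(2) False by (auto simp: y_def)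
    ultimately show ?thesis unfolding eq by blast
  qed
qed

lemma graph_noloop: "graph V E \<Longrightarrow> {i} \<notin> E"
  using edge_mem[of V E i i] by auto

lemma ip_ge_abs:
  assumes "graph V E" "{a,b} \<in> E"
  shows "\<bar>w {a,b}\<bar> \<le> ip V E w"
proof -
  have ab: "a \<in> V" "b \<in> V" "a \<noteq> b" using edge_mem[OF assms] by auto
  have fV: "finite V" using assms(1) by (simp add: graph_def)
  define x where "x = (\<lambda>i. if i = b \<and> w {a,b} < 0 then -1 else (1::real))"
  have pm: "pm {a,b} x" by (auto simp: x_def)
  have "edge_sum {a,b} E w (xx x) = w {a,b} * (x a * x b)"
    using ab assms(2) graph_noloop[OF assms(1)] unfolding edge_sum_def
    by (simp add: insert_commute)
  also have "\<dots> = \<bar>w {a,b}\<bar>" using ab by (auto simp: x_def)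
  finally have e: "edge_sum {a,b} E w (xx x) = \<bar>w {a,b}\<bar>" .
  obtain x' where x': "pm ({a,b} \<union> V) x'" "edge_sum {a,b} E w (xx x) \<le> edge_sum ({a,b} \<union> V) E w (xx x')"
    using greedy_ext[OF fV _ graph_noloop[OF assms(1)] pm] by blast
  have "{a,b} \<union> V = V" using ab by auto
  then show ?thesis using x' e ip_upper[OF fV, of x' E w] by simp
qed

lemma ip_nonneg:
  assumes "graph V E"
  shows "0 \<le> ip V E w"
proof -
  have fV: "finite V" using assms(1) by (simp add: graph_def)
  obtain x' where x': "pm ({} \<union> V) x'" "edge_sum {} E w (xx (\<lambda>_. 1)) \<le> edge_sum ({} \<union> V) E w (xx x')"
    using greedy_ext[OF fV _ graph_noloop[OF assms(1)], of "{}" "\<lambda>_. 1"] by blast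
  then show ?thesis using ip_upper[OF fV, of x' E w] by (simp add: edge_sum_def)
qed

abbreviation unitv :: "nat \<Rightarrow> ('a \<Rightarrow> nat \<Rightarrow> real) \<Rightarrow> 'a set \<Rightarrow> bool" where
  "unitv N u V \<equiv> \<forall>i\<in>V. (\<Sum>k<N. (u i k)\<^sup>2) = 1"

abbreviation dotN :: "nat \<Rightarrow> ('a \<Rightarrow> nat \<Rightarrow> real) \<Rightarrow> 'a \<Rightarrow> 'a \<Rightarrow> real" where
  "dotN N u \<equiv> (\<lambda>i j. \<Sum>k<N. u i k * u j k)"

lemma dot_bound:
  fixes a b :: "nat \<Rightarrow> real"
  assumes "(\<Sum>k<N. (a k)\<^sup>2) = 1" "(\<Sum>k<N. (b k)\<^sup>2) = 1"
  shows "\<bar>\<Sum>k<N. a k * b k\<bar> \<le> 1"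
proof -
  have "\<bar>\<Sum>k<N. a k * b k\<bar> \<le> (\<Sum>k<N. \<bar>a k * b k\<bar>)" by (rule sum_abs)
  also have "\<dots> \<le> (\<Sum>k<N. ((a k)\<^sup>2 + (b k)\<^sup>2) / 2)"
  proof (rule sum_mono)
    fix k
    have "0 \<le> (\<bar>a k\<bar> - \<bar>b k\<bar>)\<^sup>2" by simp
    then show "\<bar>a k * b k\<bar> \<le> ((a k)\<^sup>2 + (b k)\<^sup>2) / 2"
      by (simp add: power2_eq_square abs_mult algebra_simps)
  qed
  also have "\<dots> = 1" using assms by (simp add: sum_divide_distrib[symmetric] sum.distrib)
  finally show ?thesis .
qed

definition W :: "'a set \<Rightarrow> 'a set set \<Rightarrow> ('a set \<Rightarrow> real) \<Rightarrow> real" where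
  "W V E w = edge_sum V E (\<lambda>e. \<bar>w e\<bar>) (\<lambda>_ _. 1)"

lemma val_bound:
  assumes "unitv N u V"
  shows "edge_sum V E w (dotN N u) \<le> W V E w"
  unfolding W_def edge_sum_def
proof (intro divide_right_mono sum_mono)
  fix i j assume ij: "i \<in> V" "j \<in> V"
  have "\<bar>dotN N u i j\<bar> \<le> 1" using dot_bound[where N=N and a="u i" and b="u j"] assms ij by auto
  then have "w {i,j} * dotN N u i j \<le> \<bar>w {i,j}\<bar>"
  proof -
    have "w {i,j} * dotN N u i j \<le> \<bar>w {i,j}\<bar> * \<bar>dotN N u i j\<bar>"
      by (metis abs_ge_self abs_mult)
    also have "\<dots> \<le> \<bar>w {i,j}\<bar> * 1"
      using \<open>\<bar>dotN N u i j\<bar> \<le> 1\<close> by (intro mult_left_mono) auto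
    finally show ?thesis by simp
  qed
  then show "(if {i, j} \<in> E then w {i, j} * dotN N u i j else 0) \<le> (if {i, j} \<in> E then \<bar>w {i, j}\<bar> * 1 else 0)"
    by simp
qed simp

lemma W_bound:
  assumes "graph V E"
  shows "W V E w \<le> real (card V) ^ 2 * ip V E w"
proof -
  have ip0: "0 \<le> ip V E w" by (rule ip_nonneg[OF assms])
  have "(\<Sum>i\<in>V. \<Sum>j\<in>V. if {i, j} \<in> E then \<bar>w {i, j}\<bar> * 1 else 0) \<le> (\<Sum>i\<in>V. \<Sum>j\<in>V. ip V E w)"
    using ip_ge_abs[OF assms] ip0 by (intro sum_mono) auto
  also have "\<dots> = real (card V) ^ 2 * ip V E w" by (simp add: power2_eq_square)
  moreover have "0 \<le> real (card V) ^ 2 * ip V E w" using ip0 by simp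
  ultimately show ?thesis unfolding W_def edge_sum_def by linarith
qed

lemma sdp_bdd: "bdd_above {edge_sum V E w (dotN N u) | u. unitv N u V}"
  by (rule bdd_aboveI[of _ "W V E w"]) (auto intro: val_bound)

lemma sdp_ne:
  assumes "finite V"
  shows "{edge_sum V E w (dotN (card V) u) | u. unitv (card V) u V} \<noteq> {}"
proof -
  define u where "u = (\<lambda>(i::'a) (k::nat). if k = 0 then 1 else (0::real))"
  have "unitv (card V) u V"
  proof
    fix i assume "i \<in> V"
    then have "card V > 0" using assms card_gt_0_iff by blast
    have "(\<Sum>k<card V. (u i k)\<^sup>2) = (\<Sum>k<card V. if k = 0 then 1 else 0)"
      by (intro sum.cong) (auto simp: u_def)
    also have "\<dots> = 1" using \<open>card V > 0\<close> by (simp add: sum.delta)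
    finally show "(\<Sum>k<card V. (u i k)\<^sup>2) = 1" .
  qed
  then show ?thesis by blast
qed

lemma sdp_upper:
  assumes "unitv (card V) u V"
  shows "edge_sum V E w (dotN (card V) u) \<le> sdp V E w"
  unfolding sdp_def using assms by (intro cSup_upper sdp_bdd) auto

lemma sdp_le:
  assumes "finite V" "\<And>u. unitv (card V) u V \<Longrightarrow> edge_sum V E w (dotN (card V) u) \<le> B"
  shows "sdp V E w \<le> B"
  unfolding sdp_def using assms sdp_ne[OF assms(1)] by (intro cSup_least) auto

lemma sdp_le_W:
  assumes "graph V E"
  shows "sdp V E w \<le> W V E w"
  using assms by (intro sdp_le val_bound) (auto simp: graph_def)

lemma groth_bdd:
  assumes "graph V E"
  shows "bdd_above {sdp V E w / ip V E w | w. True}"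
proof (rule bdd_aboveI[of _ "real (card V) ^ 2"])
  fix r assume "r \<in> {sdp V E w / ip V E w | w. True}"
  then obtain w where r: "r = sdp V E w / ip V E w" by blast
  have "sdp V E w \<le> real (card V) ^ 2 * ip V E w"
    using sdp_le_W[OF assms] W_bound[OF assms] by (rule order_trans)
  moreover have "0 \<le> ip V E w" by (rule ip_nonneg[OF assms])
  ultimately show "r \<le> real (card V) ^ 2" unfolding r
    by (cases "ip V E w = 0") (auto simp: divide_le_eq)
qed

lemma groth_upper:
  assumes "graph V E"
  shows "sdp V E w / ip V E w \<le> groth V E"
  unfolding groth_def by (rule cSup_upper[OF _ groth_bdd[OF assms]]) auto

lemma edge_sum_zero: "edge_sum V E (\<lambda>_. 0) f = 0"
  by (simp add: edge_sum_def cong: if_cong)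

lemma ip_zero_w: "ip V E (\<lambda>_. 0) = 0"
proof -
  have "{edge_sum V E (\<lambda>_. 0) (xx x) | x. pm V x} = {0}"
    by (auto simp: edge_sum_zero intro!: exI[of _ "\<lambda>_. 1"])
  then show ?thesis unfolding ip_def by simp
qed

lemma groth_nonneg:
  assumes "graph V E"
  shows "0 \<le> groth V E"
  using groth_upper[OF assms, of "\<lambda>_. 0"] by (simp add: ip_zero_w)

lemma sdp_le_groth:
  assumes "graph V E"
  shows "sdp V E w \<le> groth V E * ip V E w"
proof (cases "ip V E w = 0")
  case True
  have "sdp V E w \<le> real (card V) ^ 2 * ip V E w"
    using sdp_le_W[OF assms] W_bound[OF assms] by (rule order_trans)
  then show ?thesis using True by simp
next
  case False
  then have "0 < ip V E w" using ip_nonneg[OF assms, of w] by simp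
  then show ?thesis using groth_upper[OF assms, of w] by (simp add: divide_le_eq)
qed

definition dt :: "nat \<Rightarrow> (nat \<Rightarrow> real) \<Rightarrow> (nat \<Rightarrow> real) \<Rightarrow> real" where
  "dt N a b = (\<Sum>k<N. a k * b k)"

definition hrefl :: "nat \<Rightarrow> (nat \<Rightarrow> real) \<Rightarrow> (nat \<Rightarrow> real) \<Rightarrow> (nat \<Rightarrow> real)" where
  "hrefl N h x = (if dt N h h = 0 then x else (\<lambda>k. x k - (2 * dt N x h / dt N h h) * h k))"

lemma dt_comm: "dt N a b = dt N b a"
  unfolding dt_def by (simp add: mult.commute)

lemma dt_lin: "dt N (\<lambda>k. x k - c * h k) y = dt N x y - c * dt N h y"
  unfolding dt_def by (simp add: algebra_simps sum_subtractf sum_distrib_left)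

lemma dt_lin2: "dt N y (\<lambda>k. x k - c * h k) = dt N y x - c * dt N y h"
  unfolding dt_def by (simp add: algebra_simps sum_subtractf sum_distrib_left)

lemma hrefl_dot: "dt N (hrefl N h x) (hrefl N h y) = dt N x y"
proof (cases "dt N h h = 0")
  case True then show ?thesis by (simp add: hrefl_def)
next
  case False
  define c where "c = dt N h h"
  define a where "a = dt N x h"
  define b where "b = dt N y h"
  have hy: "dt N h y = b" using dt_comm b_def by metis
  have "dt N (hrefl N h x) (hrefl N h y)
      = dt N (\<lambda>k. x k - (2 * a / c) * h k) (\<lambda>k. y k - (2 * b / c) * h k)"
    using False by (simp add: hrefl_def a_def b_def c_def)
  also have "\<dots> = dt N x y - (2*b/c) * dt N x h - (2*a/c) * (dt N h y - (2*b/c) * dt N h h)"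
    by (simp only: dt_lin dt_lin2)
  also have "\<dots> = dt N x y - (2*b/c) * a - (2*a/c) * (b - (2*b/c) * c)"
    using hy a_def c_def by simp
  also have "\<dots> = dt N x y" using False unfolding c_def[symmetric]
    by (simp add: field_simps)
  finally show ?thesis .
qed

lemma sum_sq_zero:
  fixes h :: "nat \<Rightarrow> real"
  assumes "(\<Sum>k<N. h k * h k) = 0" "k < N"
  shows "h k = 0"
proof -
  have "\<forall>k\<in>{..<N}. h k * h k = 0"
    using assms(1) by (subst sum_nonneg_eq_0_iff[symmetric]) auto
  then show ?thesis using assms(2) by simp
qed

lemma reduce_step:
  fixes V :: "nat \<Rightarrow> nat \<Rightarrow> real"
  assumes pN: "p < N" and zero: "\<forall>i<p. \<forall>k. p \<le> k \<longrightarrow> k < N \<longrightarrow> V i k = 0"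
  shows "\<exists>V'. (\<forall>i j. dt N (V' i) (V' j) = dt N (V i) (V j))
            \<and> (\<forall>i<Suc p. \<forall>k. Suc p \<le> k \<longrightarrow> k < N \<longrightarrow> V' i k = 0)"
proof -
  define a where "a = V p"
  define a' where "a' = (\<lambda>k. if p \<le> k \<and> k < N then a k else 0)"
  define r where "r = sqrt (dt N a' a')"
  define h where "h = (\<lambda>k. a' k - (if k = p then r else 0))"
  define V' where "V' = (\<lambda>i. hrefl N h (V i))"
  have gram: "\<forall>i j. dt N (V' i) (V' j) = dt N (V i) (V j)" by (simp add: V'_def hrefl_dot)
  have low: "dt N (V i) h = 0" if "i < p" for i
    unfolding dt_def
  proof (intro sum.neutral ballI)
    fix k assume "k \<in> {..<N}"
    then show "V i k * h k = 0" using zero that by (cases "p \<le> k") (auto simp: h_def a'_def)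
  qed
  have fix_low: "V' i = V i" if "i < p" for i
    using low[OF that] by (auto simp: V'_def hrefl_def)
  have aa: "dt N a' a' = r\<^sup>2" unfolding r_def
    by (simp add: dt_def sum_nonneg)
  have a'p: "a' p = a p" using pN by (simp add: a'_def)
  have dah: "dt N a h = dt N a' h"
    unfolding dt_def by (intro sum.cong) (auto simp: h_def a'_def)
  have da'h: "dt N a' h = r\<^sup>2 - r * a p"
  proof -
    have "dt N a' h = (\<Sum>k<N. a' k * a' k - (if k = p then a' k * r else 0))"
      unfolding dt_def h_def by (intro sum.cong) (auto simp: algebra_simps)
    also have "\<dots> = dt N a' a' - (\<Sum>k<N. if k = p then a' k * r else 0)"
      by (simp add: sum_subtractf dt_def)
    also have "\<dots> = r\<^sup>2 - r * a p" using pN aa a'p by (simp add: sum.delta)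
    finally show ?thesis .
  qed
  have dhh: "dt N h h = 2 * (r\<^sup>2 - r * a p)"
  proof -
    have "dt N h h = (\<Sum>k<N. a' k * h k - (if k = p then r * h k else 0))"
      unfolding dt_def by (intro sum.cong) (auto simp: h_def algebra_simps)
    also have "\<dots> = dt N a' h - (\<Sum>k<N. if k = p then r * h k else 0)"
      by (simp add: sum_subtractf dt_def)
    also have "\<dots> = (r\<^sup>2 - r * a p) - r * (a p - r)" using pN da'h a'p by (simp add: sum.delta h_def)
    finally show ?thesis by (simp add: algebra_simps power2_eq_square)
  qed
  have top: "V' p k = 0" if "Suc p \<le> k" "k < N" for k
  proof (cases "dt N h h = 0")
    case True
    then have "h k = 0" using sum_sq_zero[of h N k] that by (simp add: dt_def)
    then have "a k = 0" using that by (simp add: h_def a'_def)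
    then show ?thesis using True by (simp add: V'_def hrefl_def a_def)
  next
    case False
    have "2 * dt N (V p) h / dt N h h = 1"
      using False dah da'h dhh by (simp add: a_def)
    then show ?thesis using False that by (simp add: V'_def hrefl_def h_def a'_def a_def)
  qed
  have "\<forall>i<Suc p. \<forall>k. Suc p \<le> k \<longrightarrow> k < N \<longrightarrow> V' i k = 0"
  proof (intro allI impI)
    fix i k assume "i < Suc p" "Suc p \<le> k" "k < N"
    then show "V' i k = 0"
      using top fix_low zero by (cases "i = p") auto
  qed
  then show ?thesis using gram by blast
qed

lemma reduce_nat:
  fixes U :: "nat \<Rightarrow> nat \<Rightarrow> real"
  assumes "m \<le> N"
  shows "\<exists>V. (\<forall>i j. dt N (V i) (V j) = dt N (U i) (U j))
            \<and> (\<forall>i<m. \<forall>k. m \<le> k \<longrightarrow> k < N \<longrightarrow> V i k = 0)"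
proof -
  have "p \<le> N \<Longrightarrow> \<exists>V. (\<forall>i j. dt N (V i) (V j) = dt N (U i) (U j))
            \<and> (\<forall>i<p. \<forall>k. p \<le> k \<longrightarrow> k < N \<longrightarrow> V i k = 0)" for p
  proof (induction p)
    case 0
    show ?case by (intro exI[of _ U]) auto
  next
    case (Suc p)
    then obtain V where V: "\<forall>i j. dt N (V i) (V j) = dt N (U i) (U j)"
      "\<forall>i<p. \<forall>k. p \<le> k \<longrightarrow> k < N \<longrightarrow> V i k = 0" by auto
    obtain V' where "\<forall>i j. dt N (V' i) (V' j) = dt N (V i) (V j)"
       "\<forall>i<Suc p. \<forall>k. Suc p \<le> k \<longrightarrow> k < N \<longrightarrow> V' i k = 0"
      using reduce_step[of p N V] Suc.prems V(2) by auto
    then show ?case using V(1) by auto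
  qed
  then show ?thesis using assms by blast
qed

lemma dt_shrink:
  assumes "m \<le> N" "\<forall>k. m \<le> k \<longrightarrow> k < N \<longrightarrow> a k = 0"
  shows "dt N a b = dt m a b"
proof -
  have "dt N a b = (\<Sum>k\<in>{..<m}. a k * b k) + (\<Sum>k\<in>{m..<N}. a k * b k)"
    unfolding dt_def using assms(1)
    by (metis atLeast0LessThan sum.atLeastLessThan_concat zero_le)
  moreover have "(\<Sum>k\<in>{m..<N}. a k * b k) = 0" using assms(2) by (intro sum.neutral) auto
  ultimately show ?thesis by (simp add: dt_def)
qed

definition Qf :: "'a set \<Rightarrow> ('a set \<Rightarrow> real) \<Rightarrow> ('a \<Rightarrow> 'a \<Rightarrow> real) \<Rightarrow> real" where
  "Qf C t f = (\<Sum>i\<in>C. \<Sum>j\<in>C. if i \<noteq> j then t {i,j} * f i j else 0) / 2"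

lemma Qf_neg: "Qf C t (xx (\<lambda>i. - y i)) = Qf C t (xx y)"
  by (simp add: Qf_def)

lemma Qf_cong: "(\<forall>i\<in>C. y i = y' i) \<Longrightarrow> Qf C t (xx y) = Qf C t (xx y')"
  unfolding Qf_def by (intro arg_cong[where f="\<lambda>s. s / 2"] sum.cong refl) auto

lemma Qf_3:
  assumes "a \<noteq> b" "b \<noteq> c" "a \<noteq> c"
  shows "Qf {a,b,c} t (xx y) = t {a,b} * (y a * y b) + t {a,c} * (y a * y c) + t {b,c} * (y b * y c)"
  using assms unfolding Qf_def by (simp add: insert_commute algebra_simps)

lemma Qf_2:
  assumes "a \<noteq> b"
  shows "Qf {a,b} t (xx y) = t {a,b} * (y a * y b)"
  using assms unfolding Qf_def by (simp add: insert_commute algebra_simps)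

lemma Qf_1: "Qf {a} t f = 0" by (simp add: Qf_def)
lemma Qf_0: "Qf {} t f = 0" by (simp add: Qf_def)

lemma normalize:
  assumes "a \<in> C" "pm C y"
    and H4: "\<And>y. pm C y \<Longrightarrow> H (\<lambda>i. - y i) = H y"
    and P: "\<And>z. pm C z \<Longrightarrow> z a = 1 \<Longrightarrow> H z + Qf C t (xx z) = c"
  shows "H y + Qf C t (xx y) = c"
proof (cases "y a = 1")
  case True then show ?thesis using P assms(2) by blast
next
  case False
  then have "y a = -1" using assms(1,2) by blast
  then have "H (\<lambda>i. - y i) + Qf C t (xx (\<lambda>i. - y i)) = c"
    using P[of "\<lambda>i. - y i"] assms(2) by force
  then show ?thesis using H4[OF assms(2)] Qf_neg[of C t y] by simp
qed

lemma solve: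
  assumes fin: "finite C" and card: "card C \<le> 3"
    and H3: "\<And>y y'. (\<forall>i\<in>C. y i = y' i) \<Longrightarrow> H y = H y'"
    and H4: "\<And>y. pm C y \<Longrightarrow> H (\<lambda>i. - y i) = H y"
  shows "\<exists>t c. \<forall>y. pm C y \<longrightarrow> H y + Qf C t (xx y) = c"
proof -
  have "card C = 0 \<or> card C = 1 \<or> card C = 2 \<or> card C = 3" using card by linarith
  moreover
  { assume "card C = 0"
    then have C: "C = {}" using fin by simp
    have "\<forall>y. pm C y \<longrightarrow> H y + Qf C (\<lambda>_. 0) (xx y) = H (\<lambda>_. 1)"
      using H3 by (simp add: C Qf_0)
    then have ?thesis by blast }
  moreover
  { assume "card C = 1"
    then obtain a where C: "C = {a}" by (auto simp: card_1_singleton_iff)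
    have "\<forall>y. pm C y \<longrightarrow> H y + Qf C (\<lambda>_. 0) (xx y) = H (\<lambda>_. 1)"
    proof (intro allI impI)
      fix y assume y: "pm C y"
      show "H y + Qf C (\<lambda>_. 0) (xx y) = H (\<lambda>_. 1)"
      proof (rule normalize[of a C y H, OF _ y H4])
        fix z assume "pm C z" "z a = 1"
        then show "H z + Qf C (\<lambda>_. 0) (xx z) = H (\<lambda>_. 1)"
          using H3[of z "\<lambda>_. 1"] by (simp add: C Qf_1)
      qed (simp add: C)
    qed
    then have ?thesis by blast }
  moreover
  { assume "card C = 2"
    then obtain a b where C: "C = {a,b}" and ab: "a \<noteq> b" by (auto simp: card_2_iff)
    define r where "r = (\<lambda>sb. H (\<lambda>i. if i = b then sb else 1))"
    define h1 where "h1 = r 1"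
    define h2 where "h2 = r (-1)"
    define t where "t = (\<lambda>_::'a set. (h2 - h1) / 2)"
    have "\<forall>y. pm C y \<longrightarrow> H y + Qf C t (xx y) = (h1 + h2) / 2"
    proof (intro allI impI)
      fix y assume y: "pm C y"
      show "H y + Qf C t (xx y) = (h1 + h2) / 2"
      proof (rule normalize[of a C y H, OF _ y H4])
        fix z assume z: "pm C z" "z a = 1"
        have "H z = r (z b)"
          unfolding r_def using z ab by (intro H3) (auto simp: C)
        moreover have "z b = 1 \<or> z b = -1" using z C by auto
        ultimately show "H z + Qf C t (xx z) = (h1 + h2) / 2"
          using z ab unfolding C Qf_2[OF ab] h1_def h2_def t_def
          by (auto simp: field_simps)
      qed (simp add: C)
    qed
    then have ?thesis by blast }
  moreover
  { assume "card C = 3"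
    then obtain a b c where C: "C = {a,b,c}" and abc: "a \<noteq> b" "b \<noteq> c" "a \<noteq> c"
      by (auto simp: card_3_iff)
    define r where "r = (\<lambda>sb sc. H (\<lambda>i. if i = b then sb else if i = c then sc else 1))"
    define h1 where "h1 = r 1 1"
    define h2 where "h2 = r 1 (-1)"
    define h3 where "h3 = r (-1) 1"
    define h4 where "h4 = r (-1) (-1)"
    define tab where "tab = (h3 + h4 - h1 - h2) / 4"
    define tac where "tac = (h2 + h4 - h1 - h3) / 4"
    define tbc where "tbc = (h2 + h3 - h1 - h4) / 4"
    define t where "t = (\<lambda>e. if e = {a,b} then tab else if e = {a,c} then tac else tbc)"
    have tv: "t {a,b} = tab" "t {a,c} = tac" "t {b,c} = tbc"
      using abc by (auto simp: t_def doubleton_eq_iff)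
    have "\<forall>y. pm C y \<longrightarrow> H y + Qf C t (xx y) = (h1 + h2 + h3 + h4) / 4"
    proof (intro allI impI)
      fix y assume y: "pm C y"
      show "H y + Qf C t (xx y) = (h1 + h2 + h3 + h4) / 4"
      proof (rule normalize[of a C y H, OF _ y H4])
        fix z assume z: "pm C z" "z a = 1"
        have "H z = r (z b) (z c)"
          unfolding r_def using z abc by (intro H3) (auto simp: C)
        moreover have "z b = 1 \<or> z b = -1" "z c = 1 \<or> z c = -1" using z C by auto
        ultimately show "H z + Qf C t (xx z) = (h1 + h2 + h3 + h4) / 4"
          using z unfolding C Qf_3[OF abc] tv h1_def h2_def h3_def h4_def tab_def tac_def tbc_def
          by (auto simp: field_simps)
      qed (simp add: C)
    qed
    then have ?thesis by blast }
  ultimately show ?thesis by blast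
qed


lemma reduce_vecs:
  assumes "finite V" "card V \<le> N" "unitv N u V"
  shows "\<exists>v. unitv (card V) v V \<and> (\<forall>a\<in>V. \<forall>b\<in>V. dotN (card V) v a b = dotN N u a b)"
proof -
  obtain f where f: "bij_betw f {0..<card V} V" using ex_bij_betw_nat_finite[OF assms(1)] by blast
  define g where "g = inv_into {0..<card V} f"
  have g: "g a < card V \<and> f (g a) = a" if "a \<in> V" for a
  proof -
    have "g a \<in> {0..<card V}" unfolding g_def using f that
      by (metis bij_betw_def inv_into_into)
    moreover have "f (g a) = a" unfolding g_def using f that
      by (meson bij_betw_inv_into_right)
    ultimately show ?thesis by simp
  qed
  obtain Vv where Vv: "\<forall>i j. dt N (Vv i) (Vv j) = dt N (u (f i)) (u (f j))"
     "\<forall>i<card V. \<forall>k. card V \<le> k \<longrightarrow> k < N \<longrightarrow> Vv i k = 0"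
    using reduce_nat[OF assms(2), of "\<lambda>i. u (f i)"] by blast
  define v where "v = (\<lambda>a. Vv (g a))"
  have d: "dotN (card V) v a b = dotN N u a b" if "a \<in> V" "b \<in> V" for a b
  proof -
    have "dotN (card V) v a b = dt (card V) (Vv (g a)) (Vv (g b))" by (simp add: dt_def v_def)
    also have "\<dots> = dt N (Vv (g a)) (Vv (g b))"
      using dt_shrink[OF assms(2), of "Vv (g a)" "Vv (g b)"] Vv(2) g[OF that(1)] by simp
    also have "\<dots> = dt N (u (f (g a))) (u (f (g b)))" using Vv(1) by simp
    also have "\<dots> = dotN N u a b" using g that by (simp add: dt_def)
    finally show ?thesis .
  qed
  have "unitv (card V) v V"
  proof
    fix a assume a: "a \<in> V"
    have "(\<Sum>k<card V. (v a k)\<^sup>2) = dotN (card V) v a a" by (simp add: power2_eq_square)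
    also have "\<dots> = dotN N u a a" using d a by simp
    also have "\<dots> = 1" using assms(3) a by (simp add: power2_eq_square)
    finally show "(\<Sum>k<card V. (v a k)\<^sup>2) = 1" .
  qed
  then show ?thesis using d by blast
qed

lemma sdp_upper_gen:
  assumes "graph V E" "card V \<le> N" "unitv N u V"
  shows "edge_sum V E w (dotN N u) \<le> sdp V E w"
proof -
  have fin: "finite V" using assms(1) by (simp add: graph_def)
  obtain v where v: "unitv (card V) v V" "\<forall>a\<in>V. \<forall>b\<in>V. dotN (card V) v a b = dotN N u a b"
    using reduce_vecs[OF fin assms(2,3)] by blast
  have "edge_sum V E w (dotN N u) = edge_sum V E w (dotN (card V) v)"
    using v(2) by (intro edge_sum_cong) auto
  also have "\<dots> \<le> sdp V E w" by (rule sdp_upper[OF v(1)])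
  finally show ?thesis .
qed

definition NC :: "'a set \<Rightarrow> 'a set set \<Rightarrow> 'a set \<Rightarrow> ('a set \<Rightarrow> real) \<Rightarrow> ('a \<Rightarrow> 'a \<Rightarrow> real) \<Rightarrow> real" where
  "NC V E C w f = (\<Sum>i\<in>V. \<Sum>j\<in>V. if {i,j} \<in> E \<and> \<not> {i,j} \<subseteq> C then w {i,j} * f i j else 0) / 2"

lemma sum_extend:
  assumes "finite V" "V1 \<subseteq> V" "\<And>i j. P i j \<Longrightarrow> i \<in> V1 \<and> j \<in> V1"
  shows "(\<Sum>i\<in>V1. \<Sum>j\<in>V1. if P i j then g i j else (0::real))
       = (\<Sum>i\<in>V. \<Sum>j\<in>V. if P i j then g i j else 0)"
proof -
  have inner: "(\<Sum>j\<in>V1. if P i j then g i j else 0) = (\<Sum>j\<in>V. if P i j then g i j else (0::real))" for i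
    using assms by (intro sum.mono_neutral_left) auto
  have "(\<Sum>i\<in>V1. \<Sum>j\<in>V1. if P i j then g i j else (0::real))
      = (\<Sum>i\<in>V1. \<Sum>j\<in>V. if P i j then g i j else 0)" using inner by simp
  also have "\<dots> = (\<Sum>i\<in>V. \<Sum>j\<in>V. if P i j then g i j else 0)"
    using assms by (intro sum.mono_neutral_left) (auto intro!: sum.neutral)
  finally show ?thesis .
qed

lemma Qf_extend:
  assumes "finite V" "C \<subseteq> V"
  shows "Qf C t f = (\<Sum>i\<in>V. \<Sum>j\<in>V. if i \<in> C \<and> j \<in> C \<and> i \<noteq> j then t {i,j} * f i j else 0) / 2"
proof -
  have "(\<Sum>i\<in>C. \<Sum>j\<in>C. if i \<in> C \<and> j \<in> C \<and> i \<noteq> j then t {i,j} * f i j else 0)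
     = (\<Sum>i\<in>V. \<Sum>j\<in>V. if i \<in> C \<and> j \<in> C \<and> i \<noteq> j then t {i,j} * f i j else 0)"
    by (rule sum_extend[OF assms]) auto
  moreover have "(\<Sum>i\<in>C. \<Sum>j\<in>C. if i \<in> C \<and> j \<in> C \<and> i \<noteq> j then t {i,j} * f i j else 0)
     = (\<Sum>i\<in>C. \<Sum>j\<in>C. if i \<noteq> j then t {i,j} * f i j else 0)"
    by (intro sum.cong refl) auto
  ultimately show ?thesis unfolding Qf_def by simp
qed

lemma NC_extend:
  assumes "graph V1 E1" "finite V" "V1 \<subseteq> V"
  shows "NC V1 E1 C w f = (\<Sum>i\<in>V. \<Sum>j\<in>V. if {i,j} \<in> E1 \<and> \<not> {i,j} \<subseteq> C then w {i,j} * f i j else 0) / 2"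
  unfolding NC_def using edge_mem[OF assms(1)]
  by (subst sum_extend[OF assms(2,3)]) auto

lemma pw1:
  fixes w t :: "'a set \<Rightarrow> real" and f :: "'a \<Rightarrow> 'a \<Rightarrow> real"
  assumes "graph V1 E1" "\<forall>i\<in>C. \<forall>j\<in>C. i \<noteq> j \<longrightarrow> {i,j} \<in> E1"
  shows "(if {i,j} \<in> E1 then (\<lambda>e. if e \<subseteq> C then t e else w e) {i,j} * f i j else 0)
     = (if {i,j} \<in> E1 \<and> \<not> {i,j} \<subseteq> C then w {i,j} * f i j else 0)
           + (if i \<in> C \<and> j \<in> C \<and> i \<noteq> j then t {i,j} * f i j else 0)"
proof (cases "{i,j} \<in> E1")
  case True
  then have ij: "i \<noteq> j" using edge_mem[OF assms(1), of i j] by blast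
  show ?thesis
  proof (cases "{i,j} \<subseteq> C")
    case True
    then show ?thesis using ij \<open>{i,j} \<in> E1\<close> by simp
  next
    case False
    then have "\<not> (i \<in> C \<and> j \<in> C)" by simp
    then show ?thesis using False \<open>{i,j} \<in> E1\<close> by auto
  qed
next
  case False
  then have "\<not> (i \<in> C \<and> j \<in> C \<and> i \<noteq> j)" using assms(2) by blast
  then show ?thesis using False by auto
qed

lemma split1:
  assumes "graph V1 E1" "C \<subseteq> V1" "\<forall>i\<in>C. \<forall>j\<in>C. i \<noteq> j \<longrightarrow> {i,j} \<in> E1"
  shows "edge_sum V1 E1 (\<lambda>e. if e \<subseteq> C then t e else w e) f = NC V1 E1 C w f + Qf C t f"
proof -
  have fin: "finite V1" using assms(1) by (simp add: graph_def)
  have "edge_sum V1 E1 (\<lambda>e. if e \<subseteq> C then t e else w e) f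
     = (\<Sum>i\<in>V1. \<Sum>j\<in>V1. (if {i,j} \<in> E1 \<and> \<not> {i,j} \<subseteq> C then w {i,j} * f i j else 0)
           + (if i \<in> C \<and> j \<in> C \<and> i \<noteq> j then t {i,j} * f i j else 0)) / 2"
    unfolding edge_sum_def
    by (intro arg_cong[where f="\<lambda>s. s / 2"] sum.cong refl pw1[OF assms(1,3)])
  also have "\<dots> = NC V1 E1 C w f + Qf C t f"
    unfolding NC_def Qf_extend[OF fin assms(2)] sum.distrib by (simp add: add_divide_distrib)
  finally show ?thesis .
qed

lemma graph_Un:
  assumes "graph V1 E1" "graph V2 E2"
  shows "graph (V1 \<union> V2) (E1 \<union> E2)"
proof -
  have "{{i, j} | i j. i \<in> V1 \<and> j \<in> V1 \<and> i \<noteq> j} \<subseteq> {{i, j} | i j. i \<in> V1 \<union> V2 \<and> j \<in> V1 \<union> V2 \<and> i \<noteq> j}"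
    by auto
  moreover have "{{i, j} | i j. i \<in> V2 \<and> j \<in> V2 \<and> i \<noteq> j} \<subseteq> {{i, j} | i j. i \<in> V1 \<union> V2 \<and> j \<in> V1 \<union> V2 \<and> i \<noteq> j}"
    by auto
  ultimately show ?thesis using assms unfolding graph_def by (meson Un_least finite_UnI order_trans)
qed

lemma pw2:
  fixes w :: "'a set \<Rightarrow> real" and f :: "'a \<Rightarrow> 'a \<Rightarrow> real"
  assumes "graph V1 E1" "graph V2 E2" "C = V1 \<inter> V2"
    "\<forall>i\<in>C. \<forall>j\<in>C. i \<noteq> j \<longrightarrow> {i,j} \<in> E1 \<and> {i,j} \<in> E2"
  shows "(if {i,j} \<in> E1 \<union> E2 then w {i,j} * f i j else 0)
    = (if {i,j} \<in> E1 \<and> \<not> {i,j} \<subseteq> C then w {i,j} * f i j else 0)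
           + (if {i,j} \<in> E2 \<and> \<not> {i,j} \<subseteq> C then w {i,j} * f i j else 0)
           + (if i \<in> C \<and> j \<in> C \<and> i \<noteq> j then w {i,j} * f i j else 0)"
proof (cases "{i,j} \<in> E1 \<union> E2")
  case True
  then have ij: "i \<noteq> j" using edge_mem[OF assms(1), of i j] edge_mem[OF assms(2), of i j] by blast
  show ?thesis
  proof (cases "{i,j} \<subseteq> C")
    case True
    then show ?thesis using ij \<open>{i,j} \<in> E1 \<union> E2\<close> by simp
  next
    case False
    then have "\<not> (i \<in> C \<and> j \<in> C)" by simp
    moreover have "\<not> ({i,j} \<in> E1 \<and> {i,j} \<in> E2)"
      using False edge_mem[OF assms(1), of i j] edge_mem[OF assms(2), of i j] assms(3) by blast
    ultimately show ?thesis using False \<open>{i,j} \<in> E1 \<union> E2\<close> by auto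
  qed
next
  case False
  then have "\<not> (i \<in> C \<and> j \<in> C \<and> i \<noteq> j)" using assms(4) by blast
  then show ?thesis using False by auto
qed

lemma split2:
  assumes "graph V1 E1" "graph V2 E2" "C = V1 \<inter> V2"
    "\<forall>i\<in>C. \<forall>j\<in>C. i \<noteq> j \<longrightarrow> {i,j} \<in> E1 \<and> {i,j} \<in> E2"
  shows "edge_sum (V1 \<union> V2) (E1 \<union> E2) w f = NC V1 E1 C w f + NC V2 E2 C w f + Qf C w f"
proof -
  have fin: "finite (V1 \<union> V2)" using assms unfolding graph_def by auto
  have cV: "C \<subseteq> V1 \<union> V2" using assms(3) by auto
  have "edge_sum (V1 \<union> V2) (E1 \<union> E2) w f
     = (\<Sum>i\<in>V1 \<union> V2. \<Sum>j\<in>V1 \<union> V2. (if {i,j} \<in> E1 \<and> \<not> {i,j} \<subseteq> C then w {i,j} * f i j else 0)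
           + (if {i,j} \<in> E2 \<and> \<not> {i,j} \<subseteq> C then w {i,j} * f i j else 0)
           + (if i \<in> C \<and> j \<in> C \<and> i \<noteq> j then w {i,j} * f i j else 0)) / 2"
    unfolding edge_sum_def
    by (intro arg_cong[where f="\<lambda>s. s / 2"] sum.cong refl pw2[OF assms])
  also have "\<dots> = NC V1 E1 C w f + NC V2 E2 C w f + Qf C w f"
    unfolding NC_extend[OF assms(1) fin Un_upper1] NC_extend[OF assms(2) fin Un_upper2]
      Qf_extend[OF fin cV] sum.distrib
    by (simp add: add_divide_distrib)
  finally show ?thesis .
qed

lemma Qf_lin: "Qf C w f = Qf C t f + Qf C (\<lambda>e. w e - t e) f"
proof -
  have "(\<Sum>i\<in>C. \<Sum>j\<in>C. if i \<noteq> j then w {i,j} * f i j else 0)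
     = (\<Sum>i\<in>C. \<Sum>j\<in>C. (if i \<noteq> j then t {i,j} * f i j else 0) + (if i \<noteq> j then (w {i,j} - t {i,j}) * f i j else 0))"
    by (intro sum.cong refl) (simp add: algebra_simps)
  then show ?thesis unfolding Qf_def sum.distrib by (simp add: add_divide_distrib)
qed

lemma split_all:
  assumes "graph V1 E1" "graph V2 E2" "C = V1 \<inter> V2"
    "\<forall>i\<in>C. \<forall>j\<in>C. i \<noteq> j \<longrightarrow> {i,j} \<in> E1 \<and> {i,j} \<in> E2"
  shows "edge_sum (V1 \<union> V2) (E1 \<union> E2) w f
     = edge_sum V1 E1 (\<lambda>e. if e \<subseteq> C then t e else w e) f
       + edge_sum V2 E2 (\<lambda>e. if e \<subseteq> C then w e - t e else w e) f"
proof -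
  have c1: "\<forall>i\<in>C. \<forall>j\<in>C. i \<noteq> j \<longrightarrow> {i,j} \<in> E1" and c2: "\<forall>i\<in>C. \<forall>j\<in>C. i \<noteq> j \<longrightarrow> {i,j} \<in> E2"
    using assms(4) by auto
  have s1: "edge_sum V1 E1 (\<lambda>e. if e \<subseteq> C then t e else w e) f = NC V1 E1 C w f + Qf C t f"
    by (rule split1[OF assms(1) _ c1]) (simp add: assms(3))
  have s2: "edge_sum V2 E2 (\<lambda>e. if e \<subseteq> C then w e - t e else w e) f = NC V2 E2 C w f + Qf C (\<lambda>e. w e - t e) f"
    using split1[OF assms(2) _ c2, of "\<lambda>e. w e - t e" w f] assms(3) by simp
  show ?thesis unfolding split2[OF assms] s1 s2 using Qf_lin[of C w f t] by simp
qed

lemma extmax: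
  fixes A :: "('a \<Rightarrow> real) \<Rightarrow> real"
  assumes fin: "finite V1" and CV: "C \<subseteq> V1"
    and Acong: "\<And>x x'. (\<forall>i\<in>V1. x i = x' i) \<Longrightarrow> A x = A x'"
    and Aneg: "\<And>x. A (\<lambda>i. - x i) = A x"
  shows "\<exists>H. (\<forall>x. pm V1 x \<longrightarrow> A x \<le> H x)
          \<and> (\<forall>y. pm C y \<longrightarrow> (\<exists>x. pm V1 x \<and> (\<forall>i\<in>C. x i = y i) \<and> A x = H y))
          \<and> (\<forall>y y'. (\<forall>i\<in>C. y i = y' i) \<longrightarrow> H y = H y')
          \<and> (\<forall>y. H (\<lambda>i. - y i) = H y)"
proof -
  define S where "S = (\<lambda>y. {A x | x. pm V1 x \<and> (\<forall>i\<in>C. x i = y i)})"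
  define H where "H = (\<lambda>y. Max (S y))"
  have finS: "finite (S y)" for y
    unfolding S_def by (rule fin_vals[OF fin Acong])
  have neS: "S y \<noteq> {}" if "pm C y" for y
  proof -
    have "A (\<lambda>i. if i \<in> C then y i else 1) \<in> S y" using that unfolding S_def
      by (intro CollectI exI[of _ "\<lambda>i. if i \<in> C then y i else 1"]) auto
    then show ?thesis by blast
  qed
  have h1: "\<forall>x. pm V1 x \<longrightarrow> A x \<le> H x"
  proof (intro allI impI)
    fix x assume "pm V1 x"
    then have "A x \<in> S x" unfolding S_def by blast
    then show "A x \<le> H x" unfolding H_def using finS by simp
  qed
  have h2: "\<forall>y. pm C y \<longrightarrow> (\<exists>x. pm V1 x \<and> (\<forall>i\<in>C. x i = y i) \<and> A x = H y)"
  proof (intro allI impI)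
    fix y assume "pm C y"
    then have "H y \<in> S y" unfolding H_def using finS neS by (intro Max_in) auto
    then show "\<exists>x. pm V1 x \<and> (\<forall>i\<in>C. x i = y i) \<and> A x = H y" unfolding S_def by auto
  qed
  have h3: "\<forall>y y'. (\<forall>i\<in>C. y i = y' i) \<longrightarrow> H y = H y'"
  proof (intro allI impI)
    fix y y' :: "'a \<Rightarrow> real" assume "\<forall>i\<in>C. y i = y' i"
    then have "S y = S y'" unfolding S_def by auto
    then show "H y = H y'" by (simp add: H_def)
  qed
  have h4: "\<forall>y. H (\<lambda>i. - y i) = H y"
  proof
    fix y :: "'a \<Rightarrow> real"
    have "S (\<lambda>i. - y i) = S y"
    proof
      show "S (\<lambda>i. - y i) \<subseteq> S y"
      proof
        fix r assume "r \<in> S (\<lambda>i. - y i)"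
        then obtain x where x: "r = A x" "pm V1 x" "\<forall>i\<in>C. x i = - y i" unfolding S_def by blast
        have "r = A (\<lambda>i. - x i)" using x(1) Aneg by simp
        moreover have "pm V1 (\<lambda>i. - x i)" using x(2) by auto
        moreover have "\<forall>i\<in>C. - x i = y i" using x(3) by auto
        ultimately show "r \<in> S y" unfolding S_def by blast
      qed
    next
      show "S y \<subseteq> S (\<lambda>i. - y i)"
      proof
        fix r assume "r \<in> S y"
        then obtain x where x: "r = A x" "pm V1 x" "\<forall>i\<in>C. x i = y i" unfolding S_def by blast
        have "r = A (\<lambda>i. - x i)" using x(1) Aneg by simp
        moreover have "pm V1 (\<lambda>i. - x i)" using x(2) by auto
        moreover have "\<forall>i\<in>C. - x i = - y i" using x(3) by auto
        ultimately show "r \<in> S (\<lambda>i. - y i)" unfolding S_def by blast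
      qed
    qed
    then show "H (\<lambda>i. - y i) = H y" by (simp add: H_def)
  qed
  show ?thesis using h1 h2 h3 h4 by blast
qed

lemma sum_pad:
  fixes n N :: nat
  assumes "n \<le> N"
  shows "(\<Sum>k<N. if k < n then g k else (0::real)) = (\<Sum>k<n. g k)"
proof -
  have "(\<Sum>k<N. if k < n then g k else (0::real))
     = (\<Sum>k\<in>{..<n}. if k < n then g k else 0) + (\<Sum>k\<in>{n..<N}. if k < n then g k else 0)"
  proof -
    have "(\<Sum>k\<in>{0..<n}. if k < n then g k else (0::real)) + (\<Sum>k\<in>{n..<N}. if k < n then g k else 0)
        = (\<Sum>k\<in>{0..<N}. if k < n then g k else 0)"
      by (rule sum.atLeastLessThan_concat) (use assms in auto)
    then show ?thesis by (simp add: atLeast0LessThan)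
  qed
  moreover have "(\<Sum>k\<in>{n..<N}. if k < n then g k else (0::real)) = 0" by (intro sum.neutral) auto
  moreover have "(\<Sum>k\<in>{..<n}. if k < n then g k else 0) = (\<Sum>k<n. g k)" by (intro sum.cong) auto
  ultimately show ?thesis by simp
qed

lemma ext_w:
  assumes "graph V1 E1" "graph V2 E2"
  shows "edge_sum (V1 \<union> V2) (E1 \<union> E2) (\<lambda>e. if e \<in> E1 then w e else 0) f = edge_sum V1 E1 w f"
proof -
  have fin: "finite (V1 \<union> V2)" using assms unfolding graph_def by auto
  have "edge_sum (V1 \<union> V2) (E1 \<union> E2) (\<lambda>e. if e \<in> E1 then w e else 0) f
      = (\<Sum>i\<in>V1 \<union> V2. \<Sum>j\<in>V1 \<union> V2. if {i,j} \<in> E1 then w {i,j} * f i j else 0) / 2"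
    unfolding edge_sum_def by (intro arg_cong[where f="\<lambda>s. s / 2"] sum.cong refl) simp
  also have "\<dots> = edge_sum V1 E1 w f"
    unfolding edge_sum_def
    using sum_extend[OF fin Un_upper1, of "\<lambda>i j. {i,j} \<in> E1" "\<lambda>i j. w {i,j} * f i j"]
      edge_mem[OF assms(1)] by simp
  finally show ?thesis .
qed

lemma ip_ext:
  assumes "graph V1 E1" "graph V2 E2"
  shows "ip (V1 \<union> V2) (E1 \<union> E2) (\<lambda>e. if e \<in> E1 then w e else 0) = ip V1 E1 w"
proof -
  have fin: "finite (V1 \<union> V2)" using assms unfolding graph_def by auto
  have fin1: "finite V1" using assms unfolding graph_def by auto
  obtain x where x: "pm (V1 \<union> V2) x"
    "ip (V1 \<union> V2) (E1 \<union> E2) (\<lambda>e. if e \<in> E1 then w e else 0) = edge_sum (V1 \<union> V2) (E1 \<union> E2) (\<lambda>e. if e \<in> E1 then w e else 0) (xx x)"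
    using ip_attain[OF fin] by blast
  have le1: "ip (V1 \<union> V2) (E1 \<union> E2) (\<lambda>e. if e \<in> E1 then w e else 0) \<le> ip V1 E1 w"
    unfolding x(2) ext_w[OF assms] using x(1) by (intro ip_upper[OF fin1]) auto
  obtain y where y: "pm V1 y" "ip V1 E1 w = edge_sum V1 E1 w (xx y)"
    using ip_attain[OF fin1] by blast
  define y' where "y' = (\<lambda>i. if i \<in> V1 then y i else 1)"
  have "ip V1 E1 w = edge_sum V1 E1 w (xx y')"
    unfolding y(2) by (intro edge_sum_cong) (simp add: y'_def)
  also have "\<dots> = edge_sum (V1 \<union> V2) (E1 \<union> E2) (\<lambda>e. if e \<in> E1 then w e else 0) (xx y')"
    by (simp add: ext_w[OF assms])
  also have "\<dots> \<le> ip (V1 \<union> V2) (E1 \<union> E2) (\<lambda>e. if e \<in> E1 then w e else 0)"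
    using y(1) by (intro ip_upper[OF fin]) (auto simp: y'_def)
  finally show ?thesis using le1 by simp
qed

lemma sdp_ext:
  assumes "graph V1 E1" "graph V2 E2"
  shows "sdp V1 E1 w \<le> sdp (V1 \<union> V2) (E1 \<union> E2) (\<lambda>e. if e \<in> E1 then w e else 0)"
proof -
  have fin: "finite (V1 \<union> V2)" using assms unfolding graph_def by auto
  have fin1: "finite V1" using assms unfolding graph_def by auto
  have gU: "graph (V1 \<union> V2) (E1 \<union> E2)" by (rule graph_Un[OF assms])
  define n where "n = card V1"
  define N where "N = card (V1 \<union> V2)"
  have nN: "n \<le> N" unfolding n_def N_def using fin by (intro card_mono) auto
  show ?thesis
  proof (rule sdp_le[OF fin1])
    fix u assume u: "unitv (card V1) u V1"
    define u' where "u' = (\<lambda>i k. if i \<in> V1 then (if k < n then u i k else 0) else (if k = 0 then 1 else (0::real)))"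
    have dd: "dotN N u' i j = dotN n u i j" if "i \<in> V1" "j \<in> V1" for i j
    proof -
      have "dotN N u' i j = (\<Sum>k<N. if k < n then u i k * u j k else 0)"
        using that by (intro sum.cong) (auto simp: u'_def)
      also have "\<dots> = dotN n u i j" by (rule sum_pad[OF nN])
      finally show ?thesis .
    qed
    have uu: "unitv N u' (V1 \<union> V2)"
    proof
      fix i assume i: "i \<in> V1 \<union> V2"
      show "(\<Sum>k<N. (u' i k)\<^sup>2) = 1"
      proof (cases "i \<in> V1")
        case True
        have "(\<Sum>k<N. (u' i k)\<^sup>2) = dotN N u' i i" by (simp add: power2_eq_square)
        also have "\<dots> = dotN n u i i" using dd True by simp
        also have "\<dots> = 1" using u True by (simp add: n_def power2_eq_square)
        finally show ?thesis .
      next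
        case False
        have "N > 0" unfolding N_def using fin i card_gt_0_iff by blast
        have "(\<Sum>k<N. (u' i k)\<^sup>2) = (\<Sum>k<N. if k = 0 then 1 else 0)"
          using False by (intro sum.cong) (auto simp: u'_def)
        also have "\<dots> = 1" using \<open>N > 0\<close> by (simp add: sum.delta)
        finally show ?thesis .
      qed
    qed
    have "edge_sum V1 E1 w (dotN (card V1) u) = edge_sum V1 E1 w (dotN N u')"
      using dd by (intro edge_sum_cong) (simp add: n_def)
    also have "\<dots> = edge_sum (V1 \<union> V2) (E1 \<union> E2) (\<lambda>e. if e \<in> E1 then w e else 0) (dotN N u')"
      by (simp add: ext_w[OF assms])
    also have "\<dots> \<le> sdp (V1 \<union> V2) (E1 \<union> E2) (\<lambda>e. if e \<in> E1 then w e else 0)"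
      using uu unfolding N_def by (rule sdp_upper)
    finally show "edge_sum V1 E1 w (dotN (card V1) u) \<le> sdp (V1 \<union> V2) (E1 \<union> E2) (\<lambda>e. if e \<in> E1 then w e else 0)" .
  qed
qed

lemma groth_lower:
  assumes "graph V1 E1" "graph V2 E2"
  shows "groth V1 E1 \<le> groth (V1 \<union> V2) (E1 \<union> E2)"
proof -
  have gU: "graph (V1 \<union> V2) (E1 \<union> E2)" by (rule graph_Un[OF assms])
  show ?thesis unfolding groth_def[of V1 E1]
  proof (rule cSup_least)
    show "{sdp V1 E1 w / ip V1 E1 w | w. True} \<noteq> {}" by blast
  next
    fix r assume "r \<in> {sdp V1 E1 w / ip V1 E1 w | w. True}"
    then obtain w where r: "r = sdp V1 E1 w / ip V1 E1 w" by blast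
    define w' where "w' = (\<lambda>e. if e \<in> E1 then w e else 0)"
    have ipe: "ip (V1 \<union> V2) (E1 \<union> E2) w' = ip V1 E1 w" unfolding w'_def by (rule ip_ext[OF assms])
    have sde: "sdp V1 E1 w \<le> sdp (V1 \<union> V2) (E1 \<union> E2) w'" unfolding w'_def by (rule sdp_ext[OF assms])
    show "r \<le> groth (V1 \<union> V2) (E1 \<union> E2)"
    proof (cases "ip V1 E1 w = 0")
      case True
      then show ?thesis using r groth_nonneg[OF gU] by simp
    next
      case False
      then have pos: "0 < ip V1 E1 w" using ip_nonneg[OF assms(1), of w] by simp
      have "r \<le> sdp (V1 \<union> V2) (E1 \<union> E2) w' / ip (V1 \<union> V2) (E1 \<union> E2) w'"
        unfolding r ipe using sde pos by (simp add: divide_right_mono)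
      also have "\<dots> \<le> groth (V1 \<union> V2) (E1 \<union> E2)" by (rule groth_upper[OF gU])
      finally show ?thesis .
    qed
  qed
qed

theorem mainTheorem5:
  fixes V1 V2 :: "'a set" and E1 E2 :: "'a set set"
  assumes "graph V1 E1" and "graph V2 E2"
    and "\<forall>i\<in>V1 \<inter> V2. \<forall>j\<in>V1 \<inter> V2. i \<noteq> j \<longrightarrow> {i, j} \<in> E1 \<and> {i, j} \<in> E2"
    and "card (V1 \<inter> V2) \<le> 3"
  shows "groth (V1 \<union> V2) (E1 \<union> E2) = max (groth V1 E1) (groth V2 E2)"
proof -
  define C where "C = V1 \<inter> V2"
  have gU: "graph (V1 \<union> V2) (E1 \<union> E2)" by (rule graph_Un[OF assms(1,2)])
  have fin1: "finite V1" and fin2: "finite V2" using assms(1,2) by (auto simp: graph_def)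
  have finU: "finite (V1 \<union> V2)" using fin1 fin2 by simp
  have finC: "finite C" using fin1 by (simp add: C_def)
  have cardC: "card C \<le> 3" using assms(4) by (simp add: C_def)
  have CV1: "C \<subseteq> V1" and CV2: "C \<subseteq> V2" by (auto simp: C_def)
  have cl: "\<forall>i\<in>C. \<forall>j\<in>C. i \<noteq> j \<longrightarrow> {i,j} \<in> E1 \<and> {i,j} \<in> E2" using assms(3) by (simp add: C_def)
  have cl1: "\<forall>i\<in>C. \<forall>j\<in>C. i \<noteq> j \<longrightarrow> {i,j} \<in> E1" using cl by auto
  define K where "K = max (groth V1 E1) (groth V2 E2)"
  have K1: "groth V1 E1 \<le> K" and K2: "groth V2 E2 \<le> K" by (auto simp: K_def)
  have K0: "0 \<le> K" using groth_nonneg[OF assms(1)] K1 by linarith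
  have upper: "sdp (V1 \<union> V2) (E1 \<union> E2) w \<le> K * ip (V1 \<union> V2) (E1 \<union> E2) w" for w
  proof -
    define A where "A = (\<lambda>x. NC V1 E1 C w (xx x))"
    have Acong: "A x = A x'" if "\<forall>i\<in>V1. x i = x' i" for x x'
      unfolding A_def NC_def using that by (intro arg_cong[where f="\<lambda>s. s / 2"] sum.cong refl) auto
    have Aneg: "A (\<lambda>i. - x i) = A x" for x unfolding A_def NC_def by (simp only: minus_mult_minus)
    have "\<exists>H. (\<forall>x. pm V1 x \<longrightarrow> A x \<le> H x)
          \<and> (\<forall>y. pm C y \<longrightarrow> (\<exists>x. pm V1 x \<and> (\<forall>i\<in>C. x i = y i) \<and> A x = H y))
          \<and> (\<forall>y y'. (\<forall>i\<in>C. y i = y' i) \<longrightarrow> H y = H y')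
          \<and> (\<forall>y. H (\<lambda>i. - y i) = H y)"
    proof (rule extmax[OF fin1 CV1])
      show "A x = A x'" if "\<forall>i\<in>V1. x i = x' i" for x x' using Acong that by blast
      show "A (\<lambda>i. - x i) = A x" for x by (rule Aneg)
    qed
    then obtain H where H1: "\<forall>x. pm V1 x \<longrightarrow> A x \<le> H x"
      and H2: "\<forall>y. pm C y \<longrightarrow> (\<exists>x. pm V1 x \<and> (\<forall>i\<in>C. x i = y i) \<and> A x = H y)"
      and H3: "\<forall>y y'. (\<forall>i\<in>C. y i = y' i) \<longrightarrow> H y = H y'"
      and H4: "\<forall>y. H (\<lambda>i. - y i) = H y"
      by blast
    have "\<exists>t c. \<forall>y. pm C y \<longrightarrow> H y + Qf C t (xx y) = c"
    proof (rule solve[OF finC cardC])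
      show "H y = H y'" if "\<forall>i\<in>C. y i = y' i" for y y' using H3 that by blast
      show "H (\<lambda>i. - y i) = H y" for y using H4 by blast
    qed
    then obtain t c where tc: "\<forall>y. pm C y \<longrightarrow> H y + Qf C t (xx y) = c" by blast
    define w1 where "w1 = (\<lambda>e. if e \<subseteq> C then t e else w e)"
    define w2 where "w2 = (\<lambda>e. if e \<subseteq> C then w e - t e else w e)"
    have sp: "edge_sum (V1 \<union> V2) (E1 \<union> E2) w f = edge_sum V1 E1 w1 f + edge_sum V2 E2 w2 f" for f
      unfolding w1_def w2_def by (rule split_all[OF assms(1,2) C_def cl])
    have e1: "edge_sum V1 E1 w1 (xx x) = A x + Qf C t (xx x)" for x
      unfolding w1_def A_def by (rule split1[OF assms(1) CV1 cl1])
    have ip1: "ip V1 E1 w1 \<le> c"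
    proof -
      obtain x where x: "pm V1 x" "ip V1 E1 w1 = edge_sum V1 E1 w1 (xx x)" using ip_attain[OF fin1] by blast
      have "ip V1 E1 w1 = A x + Qf C t (xx x)" using x(2) e1 by simp
      also have "\<dots> \<le> H x + Qf C t (xx x)" using H1 x(1) by simp
      also have "\<dots> = c" using tc x(1) CV1 by auto
      finally show ?thesis .
    qed
    obtain x2 where x2: "pm V2 x2" "ip V2 E2 w2 = edge_sum V2 E2 w2 (xx x2)" using ip_attain[OF fin2] by blast
    have pC: "pm C x2" using x2(1) CV2 by blast
    obtain x1 where x1: "pm V1 x1" "\<forall>i\<in>C. x1 i = x2 i" "A x1 = H x2"
      using mp[OF spec[OF H2, of x2] pC] by (elim exE conjE) blast
    define x where "x = (\<lambda>i. if i \<in> V1 then x1 i else x2 i)"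
    have ex1: "edge_sum V1 E1 w1 (xx x) = edge_sum V1 E1 w1 (xx x1)"
      by (intro edge_sum_cong) (simp add: x_def)
    have ex2: "edge_sum V2 E2 w2 (xx x) = edge_sum V2 E2 w2 (xx x2)"
      using x1(2) by (intro edge_sum_cong) (auto simp: x_def C_def)
    have "edge_sum V1 E1 w1 (xx x1) = H x2 + Qf C t (xx x2)"
      using e1[of x1] x1(3) Qf_cong[OF x1(2), of t] by simp
    also have "\<dots> = c" using tc pC by simp
    finally have ec: "edge_sum V1 E1 w1 (xx x1) = c" .
    have pmx: "pm (V1 \<union> V2) x" using x1(1) x2(1) by (auto simp: x_def)
    have ipsum: "ip V1 E1 w1 + ip V2 E2 w2 \<le> ip (V1 \<union> V2) (E1 \<union> E2) w"
    proof -
      have "ip V1 E1 w1 + ip V2 E2 w2 \<le> c + ip V2 E2 w2" using ip1 by simp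
      also have "\<dots> = edge_sum (V1 \<union> V2) (E1 \<union> E2) w (xx x)"
        using sp[of "xx x"] ex1 ex2 ec x2(2) by simp
      also have "\<dots> \<le> ip (V1 \<union> V2) (E1 \<union> E2) w" by (rule ip_upper[OF finU pmx])
      finally show ?thesis .
    qed
    have ipn1: "0 \<le> ip V1 E1 w1" and ipn2: "0 \<le> ip V2 E2 w2"
      using ip_nonneg[OF assms(1)] ip_nonneg[OF assms(2)] by auto
    show ?thesis
    proof (rule sdp_le[OF finU])
      fix u assume u: "unitv (card (V1 \<union> V2)) u (V1 \<union> V2)"
      define N where "N = card (V1 \<union> V2)"
      have c1: "card V1 \<le> N" and c2: "card V2 \<le> N" unfolding N_def using finU by (auto intro: card_mono)
      have u1: "unitv N u V1" and u2: "unitv N u V2" using u by (auto simp: N_def)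
      have "edge_sum (V1 \<union> V2) (E1 \<union> E2) w (dotN N u) = edge_sum V1 E1 w1 (dotN N u) + edge_sum V2 E2 w2 (dotN N u)"
        by (rule sp)
      also have "\<dots> \<le> sdp V1 E1 w1 + sdp V2 E2 w2"
        using sdp_upper_gen[OF assms(1) c1 u1, of w1] sdp_upper_gen[OF assms(2) c2 u2, of w2] by simp
      also have "\<dots> \<le> groth V1 E1 * ip V1 E1 w1 + groth V2 E2 * ip V2 E2 w2"
        using sdp_le_groth[OF assms(1), of w1] sdp_le_groth[OF assms(2), of w2] by simp
      also have "\<dots> \<le> K * ip V1 E1 w1 + K * ip V2 E2 w2"
        using mult_right_mono[OF K1 ipn1] mult_right_mono[OF K2 ipn2] by simp
      also have "\<dots> = K * (ip V1 E1 w1 + ip V2 E2 w2)" by (simp add: algebra_simps)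
      also have "\<dots> \<le> K * ip (V1 \<union> V2) (E1 \<union> E2) w" by (rule mult_left_mono[OF ipsum K0])
      finally show "edge_sum (V1 \<union> V2) (E1 \<union> E2) w (dotN (card (V1 \<union> V2)) u) \<le> K * ip (V1 \<union> V2) (E1 \<union> E2) w"
        by (simp add: N_def)
    qed
  qed
  have le: "groth (V1 \<union> V2) (E1 \<union> E2) \<le> K"
    unfolding groth_def[of "V1 \<union> V2"]
  proof (rule cSup_least)
    show "{sdp (V1 \<union> V2) (E1 \<union> E2) w / ip (V1 \<union> V2) (E1 \<union> E2) w | w. True} \<noteq> {}" by blast
  next
    fix r assume "r \<in> {sdp (V1 \<union> V2) (E1 \<union> E2) w / ip (V1 \<union> V2) (E1 \<union> E2) w | w. True}"
    then obtain w where r: "r = sdp (V1 \<union> V2) (E1 \<union> E2) w / ip (V1 \<union> V2) (E1 \<union> E2) w" by blast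
    show "r \<le> K"
    proof (cases "ip (V1 \<union> V2) (E1 \<union> E2) w = 0")
      case True then show ?thesis using r K0 by simp
    next
      case False
      then have "0 < ip (V1 \<union> V2) (E1 \<union> E2) w" using ip_nonneg[OF gU, of w] by simp
      then show ?thesis using upper[of w] unfolding r by (simp add: divide_le_eq)
    qed
  qed
  have ge1: "groth V1 E1 \<le> groth (V1 \<union> V2) (E1 \<union> E2)" by (rule groth_lower[OF assms(1,2)])
  have ge2: "groth V2 E2 \<le> groth (V1 \<union> V2) (E1 \<union> E2)"
    using groth_lower[OF assms(2,1)] by (simp add: Un_commute)
  show ?thesis using le ge1 ge2 unfolding K_def by linarith
qed

end
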